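(* Let $n\ge2$ and let $\mathbb{A}=(A_{ij})_{i,j=1}^n$ be an operator matrix as in the context, and assume that $\mathbb{A}_k$ is closed for all $k\in\{2,\ldots,n\}$. If $\sigma(A_{kk})\cup\sigma(\mathbb{A}_k)\ne\mathbb{C}$ for all $k\in\{2,\ldots,n-1\}$, then $\sigma(\mathbb{A})\subset S_n(\mathbb{A})$.
   Context: Let $X_1,\ldots,X_n$ be complex Banach spaces and $X=X_1\times\cdots\times X_n$ with norm $\|x\|=\sum_i\|x_i\|_{X_i}$. For $i,j\in\{1,\ldots,n\}$, $A_{ij}:\mathcal{D}(A_{ij})\subset X_j\to X_i$ are linear operators with $A_{ii}$ closed and, for $i\ne j$, $A_{ij}$ relatively $A_{jj}$-bounded (i.e. $\mathcal{D}(A_{jj})\subset\mathcal{D}(A_{ij})$ and there are $\alpha,\beta\ge0$ with $\|A_{ij}x\|\le\alpha\|x\|+\beta\|A_{jj}x\|$ for $x\in\mathcal{D}(A_{jj})$). The operator matrix $\mathbb{A}=(A_{ij})$ acts on $\mathcal{D}(\mathbb{A})=\mathcal{D}(A_{11})\times\cdots\times\mathcal{D}(A_{nn})$ by $(\mathbb{A}x)_i=\sum_jA_{ij}x_j$. For $1\le k\le n$, $\mathbb{A}_k:=(A_{ij})_{i,j=1}^k$ acts on $X_1\times\cdots\times X_k$ with domain $\mathcal{D}(A_{11})\times\cdots\times\mathcal{D}(A_{kk})$. For a linear operator $S$ on a Banach space $Y$, $\sigma(S)$ is the set of $\lambda$ for which $\lambda-S:\mathcal{D}(S)\to Y$ is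 not bijective with bounded inverse. For $j\ne k$ and $\lambda\notin\sigma(A_{kk})\cup\sigma(A_{jj})$ set \[ \mathcal{R}_{kj}(\lambda):=\sum_{i=1,i\ne k}^n\Big\|\Big(A_{ik}(\lambda-A_{kk})^{-1}A_{kj}+(1-\delta_{ij})A_{ij}\Big)(\lambda-A_{jj})^{-1}\Big\|, \] ($\delta_{ij}$ the Kronecker delta, norms are operator norms $X_j\to X_i$), the Schur sets $S_{kj}(\mathbb{A}):=\sigma(A_{kk})\cup\sigma(A_{jj})\cup\{\lambda\in\mathbb{C}\setminus(\sigma(A_{kk})\cup\sigma(A_{jj})):\mathcal{R}_{kj}(\lambda)\ge1\}$, and $S_k(\mathbb{A}):=\bigcup_{j=1,j\ne k}^nS_{kj}(\mathbb{A})$. *)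

theory Defs
  imports "HOL-Analysis.Analysis"
begin

text \<open>A complex Banach space is modelled as a real Banach space of type 'a
  together with a complex structure J (multiplication by the imaginary unit)
  compatible with the norm.\<close>

definition cscale :: "('a::real_vector \<Rightarrow> 'a) \<Rightarrow> complex \<Rightarrow> 'a \<Rightarrow> 'a" where
  "cscale J c x = Re c *\<^sub>R x + Im c *\<^sub>R J x"

definition complex_structure :: "('a::real_normed_vector \<Rightarrow> 'a) \<Rightarrow> bool" where
  "complex_structure J \<longleftrightarrow> linear J \<and> (\<forall>x. J (J x) = - x) \<and>
     (\<forall>c x. norm (cscale J c x) = cmod c * norm x)"

definition csubspace :: "('a::real_vector \<Rightarrow> 'a) \<Rightarrow> 'a set \<Rightarrow> bool" where
  "csubspace J V \<longleftrightarrow> 0 \<in> V \<and> (\<forall>x\<in>V. \<forall>y\<in>V. x + y \<in> V) \<and> (\<forall>c. \<forall>x\<in>V. cscale J c x \<in> V)"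

definition cbanach :: "('a::banach \<Rightarrow> 'a) \<Rightarrow> 'a set \<Rightarrow> bool" where
  "cbanach J V \<longleftrightarrow> csubspace J V \<and> closed V"

definition lin_op :: "('a::real_vector \<Rightarrow> 'a) \<Rightarrow> 'a set \<Rightarrow> 'a set \<Rightarrow> 'a set \<Rightarrow> ('a \<Rightarrow> 'a) \<Rightarrow> bool" where
  "lin_op J Y Z D T \<longleftrightarrow> csubspace J D \<and> D \<subseteq> Y \<and> T ` D \<subseteq> Z \<and>
     (\<forall>x\<in>D. \<forall>y\<in>D. T (x + y) = T x + T y) \<and> (\<forall>c. \<forall>x\<in>D. T (cscale J c x) = cscale J c (T x))"

definition closed_op :: "'a set \<Rightarrow> ('a::real_normed_vector \<Rightarrow> 'a) \<Rightarrow> bool" where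
  "closed_op D T \<longleftrightarrow> (\<forall>s x y. (\<forall>m. s m \<in> D) \<and> s \<longlonglongrightarrow> x \<and> (\<lambda>m. T (s m)) \<longlonglongrightarrow> y
       \<longrightarrow> x \<in> D \<and> T x = y)"

definition rel_bounded :: "'a set \<Rightarrow> ('a::real_normed_vector \<Rightarrow> 'a) \<Rightarrow> 'a set \<Rightarrow> ('a \<Rightarrow> 'a) \<Rightarrow> bool" where
  "rel_bounded DB B D T \<longleftrightarrow> D \<subseteq> DB \<and>
     (\<exists>\<alpha> \<beta>. \<alpha> \<ge> 0 \<and> \<beta> \<ge> 0 \<and> (\<forall>x\<in>D. norm (B x) \<le> \<alpha> * norm x + \<beta> * norm (T x)))"

definition bdd_invertible :: "'v set \<Rightarrow> 'v set \<Rightarrow> ('v \<Rightarrow> 'v) \<Rightarrow> ('v \<Rightarrow> real) \<Rightarrow> bool" where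
  "bdd_invertible Y D T N \<longleftrightarrow> bij_betw T D Y \<and> (\<exists>C. \<forall>x\<in>D. N x \<le> C * N (T x))"

definition op_spectrum :: "('a::real_normed_vector \<Rightarrow> 'a) \<Rightarrow> 'a set \<Rightarrow> 'a set \<Rightarrow> ('a \<Rightarrow> 'a) \<Rightarrow> complex set" where
  "op_spectrum J Y D T = {l. \<not> bdd_invertible Y D (\<lambda>x. cscale J l x - T x) norm}"

definition resolvent :: "('a::real_normed_vector \<Rightarrow> 'a) \<Rightarrow> 'a set \<Rightarrow> ('a \<Rightarrow> 'a) \<Rightarrow> complex \<Rightarrow> 'a \<Rightarrow> 'a" where
  "resolvent J D T l y = (THE x. x \<in> D \<and> cscale J l x - T x = y)"

definition op_norm :: "'a set \<Rightarrow> ('a::real_normed_vector \<Rightarrow> 'a) \<Rightarrow> real" where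
  "op_norm Y T = Sup ((\<lambda>x. norm (T x)) ` {x \<in> Y. norm x \<le> 1})"

text \<open>Elements of X_1 \<times> ... \<times> X_k are represented as functions nat \<Rightarrow> 'a,
  with component i in X i for 1 \<le> i \<le> k and equal to 0 elsewhere.\<close>
definition prod_space :: "(nat \<Rightarrow> 'a::zero set) \<Rightarrow> nat \<Rightarrow> (nat \<Rightarrow> 'a) set" where
  "prod_space X k = {x. (\<forall>i\<in>{1..k}. x i \<in> X i) \<and> (\<forall>i. i \<notin> {1..k} \<longrightarrow> x i = 0)}"

definition prod_norm :: "nat \<Rightarrow> (nat \<Rightarrow> 'a::real_normed_vector) \<Rightarrow> real" where
  "prod_norm k x = (\<Sum>i=1..k. norm (x i))"

definition mat_op :: "nat \<Rightarrow> (nat \<Rightarrow> nat \<Rightarrow> 'a \<Rightarrow> 'a::real_vector) \<Rightarrow> (nat \<Rightarrow> 'a) \<Rightarrow> (nat \<Rightarrow> 'a)" where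
  "mat_op k A x = (\<lambda>i. if i \<in> {1..k} then (\<Sum>j=1..k. A i j (x j)) else 0)"

definition mat_dom :: "nat \<Rightarrow> (nat \<Rightarrow> nat \<Rightarrow> 'a set) \<Rightarrow> (nat \<Rightarrow> 'a::zero) set" where
  "mat_dom k D = prod_space (\<lambda>i. D i i) k"

text \<open>Closedness of A_k: graph closed in (X_1\<times>..\<times>X_k)^2 with the sum norm
  (convergence in the sum norm is componentwise convergence).\<close>
definition mat_closed :: "nat \<Rightarrow> (nat \<Rightarrow> nat \<Rightarrow> 'a set) \<Rightarrow> (nat \<Rightarrow> nat \<Rightarrow> 'a \<Rightarrow> 'a::real_normed_vector) \<Rightarrow> bool" where
  "mat_closed k D A \<longleftrightarrow> (\<forall>s x y. (\<forall>m. s m \<in> mat_dom k D) \<and>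
       (\<lambda>m. prod_norm k (\<lambda>i. s m i - x i)) \<longlonglongrightarrow> 0 \<and>
       (\<lambda>m. prod_norm k (\<lambda>i. mat_op k A (s m) i - y i)) \<longlonglongrightarrow> 0 \<and>
       (\<forall>i. i \<notin> {1..k} \<longrightarrow> x i = 0 \<and> y i = 0)
       \<longrightarrow> x \<in> mat_dom k D \<and> mat_op k A x = y)"

definition mat_spectrum :: "('a \<Rightarrow> 'a) \<Rightarrow> (nat \<Rightarrow> 'a set) \<Rightarrow> nat \<Rightarrow> (nat \<Rightarrow> nat \<Rightarrow> 'a set)
     \<Rightarrow> (nat \<Rightarrow> nat \<Rightarrow> 'a \<Rightarrow> 'a::real_normed_vector) \<Rightarrow> complex set" where
  "mat_spectrum J X k D A = {l. \<not> bdd_invertible (prod_space X k) (mat_dom k D)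
      (\<lambda>x. (\<lambda>i. if i \<in> {1..k} then cscale J l (x i) else 0) - mat_op k A x) (prod_norm k)}"

definition schur_R :: "('a \<Rightarrow> 'a) \<Rightarrow> (nat \<Rightarrow> 'a set) \<Rightarrow> nat \<Rightarrow> (nat \<Rightarrow> nat \<Rightarrow> 'a set)
     \<Rightarrow> (nat \<Rightarrow> nat \<Rightarrow> 'a \<Rightarrow> 'a::real_normed_vector) \<Rightarrow> nat \<Rightarrow> nat \<Rightarrow> complex \<Rightarrow> real" where
  "schur_R J X n D A k j l = (\<Sum>i\<in>{1..n} - {k}.
      op_norm (X j) (\<lambda>x. A i k (resolvent J (D k k) (A k k) l (A k j (resolvent J (D j j) (A j j) l x)))
                       + (if i = j then 0 else A i j (resolvent J (D j j) (A j j) l x))))"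

definition schur_set2 :: "('a \<Rightarrow> 'a) \<Rightarrow> (nat \<Rightarrow> 'a set) \<Rightarrow> nat \<Rightarrow> (nat \<Rightarrow> nat \<Rightarrow> 'a set)
     \<Rightarrow> (nat \<Rightarrow> nat \<Rightarrow> 'a \<Rightarrow> 'a::real_normed_vector) \<Rightarrow> nat \<Rightarrow> nat \<Rightarrow> complex set" where
  "schur_set2 J X n D A k j =
     op_spectrum J (X k) (D k k) (A k k) \<union> op_spectrum J (X j) (D j j) (A j j) \<union>
     {l. l \<notin> op_spectrum J (X k) (D k k) (A k k) \<union> op_spectrum J (X j) (D j j) (A j j) \<and>
         schur_R J X n D A k j l \<ge> 1}"

definition schur_set :: "('a \<Rightarrow> 'a) \<Rightarrow> (nat \<Rightarrow> 'a set) \<Rightarrow> nat \<Rightarrow> (nat \<Rightarrow> nat \<Rightarrow> 'a set)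
     \<Rightarrow> (nat \<Rightarrow> nat \<Rightarrow> 'a \<Rightarrow> 'a::real_normed_vector) \<Rightarrow> nat \<Rightarrow> complex set" where
  "schur_set J X n D A k = (\<Union>j\<in>{1..n} - {k}. schur_set2 J X n D A k j)"

definition op_matrix :: "('a \<Rightarrow> 'a) \<Rightarrow> (nat \<Rightarrow> 'a set) \<Rightarrow> nat \<Rightarrow> (nat \<Rightarrow> nat \<Rightarrow> 'a set)
     \<Rightarrow> (nat \<Rightarrow> nat \<Rightarrow> 'a \<Rightarrow> 'a::banach) \<Rightarrow> bool" where
  "op_matrix J X n D A \<longleftrightarrow> complex_structure J \<and> (\<forall>i\<in>{1..n}. cbanach J (X i)) \<and>
     (\<forall>i\<in>{1..n}. \<forall>j\<in>{1..n}. lin_op J (X j) (X i) (D i j) (A i j)) \<and>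
     (\<forall>i\<in>{1..n}. closed_op (D i i) (A i i)) \<and>
     (\<forall>i\<in>{1..n}. \<forall>j\<in>{1..n}. i \<noteq> j \<longrightarrow> rel_bounded (D i j) (A i j) (D j j) (A j j))"

end

theory Submission
  imports Defs
begin



lemma comp_le_prod_norm:
  assumes "i \<in> {1..m}" shows "norm (u i) \<le> prod_norm m u"
  unfolding prod_norm_def using assms by (intro member_le_sum) auto

lemma fixpt:
  fixes K :: "(nat \<Rightarrow> 'a::banach) \<Rightarrow> (nat \<Rightarrow> 'a)"
  assumes closedY: "\<forall>i\<in>{1..m}. closed (Y i)"
    and addY: "\<forall>i\<in>{1..m}. \<forall>a\<in>Y i. \<forall>b\<in>Y i. a + b \<in> Y i"
    and KP: "\<forall>u\<in>prod_space Y m. K u \<in> prod_space Y m"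
    and Kc: "\<forall>u\<in>prod_space Y m. \<forall>v\<in>prod_space Y m. prod_norm m (K u - K v) \<le> q * prod_norm m (u - v)"
    and q: "0 \<le> q" "q < 1" and w: "w \<in> prod_space Y m"
  shows "\<exists>y\<in>prod_space Y m. y = (\<lambda>i. w i + K y i)"
proof -
  define s where "s k = ((\<lambda>y i. w i + K y i) ^^ k) w" for k
  have s0: "s 0 = w" by (simp add: s_def)
  have sS: "s (Suc k) = (\<lambda>i. w i + K (s k) i)" for k by (simp add: s_def)
  have sP: "s k \<in> prod_space Y m" for k
  proof (induction k)
    case 0 then show ?case using w s0 by simp
  next
    case (Suc k)
    have "K (s k) \<in> prod_space Y m" using KP Suc by blast
    then show ?case using w addY unfolding sS prod_space_def by (auto simp:)
  qed
  define d0 where "d0 = prod_norm m (s 1 - s 0)"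
  have dk: "prod_norm m (s (Suc k) - s k) \<le> q ^ k * d0" for k
  proof (induction k)
    case 0 then show ?case by (simp add: d0_def fun_diff_def)
  next
    case (Suc k)
    have "s (Suc (Suc k)) - s (Suc k) = K (s (Suc k)) - K (s k)"
      unfolding sS[of "Suc k"] sS[of k] by (simp add: fun_diff_def)
    then have "prod_norm m (s (Suc (Suc k)) - s (Suc k)) \<le> q * prod_norm m (s (Suc k) - s k)"
      using Kc sP by (metis sS)
    also have "\<dots> \<le> q * (q ^ k * d0)" by (rule mult_left_mono[OF Suc.IH q(1)])
    finally show ?case by (simp only: power_Suc mult.assoc)
  qed
  have conv: "\<exists>L. (\<lambda>k. s k i) \<longlonglongrightarrow> L" if i: "i \<in> {1..m}" for i
  proof -
    have "summable (\<lambda>k. s (Suc k) i - s k i)"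
    proof (rule summable_comparison_test)
      show "\<exists>N. \<forall>k\<ge>N. norm (s (Suc k) i - s k i) \<le> q ^ k * d0"
        using comp_le_prod_norm[OF i, of "s (Suc _) - s _"] dk
        by (metis minus_apply order_trans)
      show "summable (\<lambda>k. q ^ k * d0)" using q by (intro summable_mult2) simp
    qed
    then have "(\<lambda>k. \<Sum>j<k. s (Suc j) i - s j i) \<longlonglongrightarrow> (\<Sum>k. s (Suc k) i - s k i)"
      by (rule summable_LIMSEQ)
    moreover have "(\<Sum>j<k. s (Suc j) i - s j i) = s k i - s 0 i" for k
      by (rule sum_lessThan_telescope)
    ultimately have "(\<lambda>k. s k i - s 0 i) \<longlonglongrightarrow> (\<Sum>k. s (Suc k) i - s k i)" by simp
    then have "(\<lambda>k. (s k i - s 0 i) + s 0 i) \<longlonglongrightarrow> (\<Sum>k. s (Suc k) i - s k i) + s 0 i"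
      by (intro tendsto_add) auto
    then show ?thesis by auto
  qed
  define y where "y i = (if i \<in> {1..m} then lim (\<lambda>k. s k i) else 0)" for i
  have ylim: "(\<lambda>k. s k i) \<longlonglongrightarrow> y i" if "i \<in> {1..m}" for i
    using conv[OF that] that unfolding y_def by (auto intro: convergentI simp: convergent_LIMSEQ_iff[symmetric])
  have yP: "y \<in> prod_space Y m"
    unfolding prod_space_def
  proof safe
    fix i assume i: "i \<in> {1..m}"
    show "y i \<in> Y i"
      using closed_sequentially[OF _ _ ylim[OF i], of "Y i"] closedY i sP unfolding prod_space_def by auto
  next
    fix i assume "i \<notin> {1..m}" then show "y i = 0" by (auto simp: y_def)
  qed
  have dist0: "(\<lambda>k. prod_norm m (s k - y)) \<longlonglongrightarrow> 0"
  proof -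
    have "(\<lambda>k. \<Sum>i=1..m. norm (s k i - y i)) \<longlonglongrightarrow> (\<Sum>i=1..m. 0)"
      by (intro tendsto_sum tendsto_norm_zero LIM_zero ylim) auto
    then show ?thesis by (simp add: prod_norm_def)
  qed
  have "(w i + K y i) = y i" for i
  proof (cases "i \<in> {1..m}")
    case True
    have "(\<lambda>k. s (Suc k) i - (w i + K y i)) \<longlonglongrightarrow> 0"
    proof (rule Lim_null_comparison)
      show "\<forall>\<^sub>F k in sequentially. norm (s (Suc k) i - (w i + K y i)) \<le> q * prod_norm m (s k - y)"
      proof (intro always_eventually allI)
        fix k
        have "norm (s (Suc k) i - (w i + K y i)) = norm ((K (s k) - K y) i)"
          by (simp add: sS)
        also have "\<dots> \<le> prod_norm m (K (s k) - K y)" by (rule comp_le_prod_norm[OF True])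
        also have "\<dots> \<le> q * prod_norm m (s k - y)" using Kc sP yP by blast
        finally show "norm (s (Suc k) i - (w i + K y i)) \<le> q * prod_norm m (s k - y)" .
      qed
      show "(\<lambda>k. q * prod_norm m (s k - y)) \<longlonglongrightarrow> 0"
        using tendsto_mult[OF tendsto_const dist0, of q] by simp
    qed
    then have "(\<lambda>k. s (Suc k) i) \<longlonglongrightarrow> (w i + K y i)" by (rule LIM_zero_cancel)
    moreover have "(\<lambda>k. s (Suc k) i) \<longlonglongrightarrow> y i" using ylim[OF True] by (rule LIMSEQ_Suc)
    ultimately show ?thesis by (rule LIMSEQ_unique)
  next
    case False
    have "K y \<in> prod_space Y m" using KP yP by blast
    then show ?thesis using w False unfolding prod_space_def by (auto simp: y_def)
  qed
  then show ?thesis using yP by (intro bexI[of _ y]) auto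
qed




lemma cscale_real: "cscale J (complex_of_real c) x = c *\<^sub>R x"
  by (simp add: cscale_def)

lemma cs_linear: "complex_structure J \<Longrightarrow> linear J"
  by (simp add: complex_structure_def)

lemma cscale_add: "complex_structure J \<Longrightarrow> cscale J l (a + b) = cscale J l a + cscale J l b"
  using cs_linear[of J] by (simp add: cscale_def linear_add scaleR_add_right)

lemma cscale_diff: "complex_structure J \<Longrightarrow> cscale J l (a - b) = cscale J l a - cscale J l b"
  using cs_linear[of J] by (simp add: cscale_def linear_diff scaleR_diff_right)

lemma cscale_scaleR: "complex_structure J \<Longrightarrow> cscale J l (c *\<^sub>R a) = c *\<^sub>R cscale J l a"
  using cs_linear[of J] by (simp add: cscale_def linear_scale scaleR_add_right mult.commute)

lemma cscale_norm: "complex_structure J \<Longrightarrow> norm (cscale J l a) = cmod l * norm a"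
  by (simp add: complex_structure_def)

lemma csub_zero: "csubspace J V \<Longrightarrow> 0 \<in> V" by (simp add: csubspace_def)
lemma csub_add: "csubspace J V \<Longrightarrow> a \<in> V \<Longrightarrow> b \<in> V \<Longrightarrow> a + b \<in> V" by (simp add: csubspace_def)
lemma csub_cscale: "csubspace J V \<Longrightarrow> a \<in> V \<Longrightarrow> cscale J c a \<in> V" by (simp add: csubspace_def)
lemma csub_scaleR: "csubspace J V \<Longrightarrow> a \<in> V \<Longrightarrow> c *\<^sub>R a \<in> V"
  using csub_cscale[of J V a "complex_of_real c"] by (simp add: cscale_real)
lemma csub_neg: "csubspace J V \<Longrightarrow> a \<in> V \<Longrightarrow> - a \<in> V"
  using csub_scaleR[of J V a "-1"] by simp
lemma csub_diff: "csubspace J V \<Longrightarrow> a \<in> V \<Longrightarrow> b \<in> V \<Longrightarrow> a - b \<in> V"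
  using csub_add[of J V a "-b"] csub_neg[of J V b] by simp
lemma csub_sum: "csubspace J V \<Longrightarrow> (\<forall>j\<in>S. u j \<in> V) \<Longrightarrow> sum u S \<in> V"
proof (induction S rule: infinite_finite_induct)
  case (infinite A) then show ?case by (simp add: csub_zero)
next
  case empty then show ?case by (simp add: csub_zero)
next
  case (insert x F) then show ?case by (simp add: csub_add)
qed

definition bop :: "'a set \<Rightarrow> 'b set \<Rightarrow> ('a::real_normed_vector \<Rightarrow> 'b::real_normed_vector) \<Rightarrow> bool" where
  "bop Y Z F \<longleftrightarrow> (\<forall>x\<in>Y. F x \<in> Z) \<and> (\<forall>x\<in>Y. \<forall>y\<in>Y. F (x+y) = F x + F y) \<and>
     (\<forall>c. \<forall>x\<in>Y. F (c *\<^sub>R x) = c *\<^sub>R F x) \<and> (\<exists>M. \<forall>x\<in>Y. norm (F x) \<le> M * norm x)"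

lemma bopI:
  assumes "\<And>x. x\<in>Y \<Longrightarrow> F x \<in> Z" "\<And>x y. x\<in>Y \<Longrightarrow> y\<in>Y \<Longrightarrow> F (x+y) = F x + F y"
    "\<And>c x. x\<in>Y \<Longrightarrow> F (c *\<^sub>R x) = c *\<^sub>R F x" "\<And>x. x\<in>Y \<Longrightarrow> norm (F x) \<le> M * norm x"
  shows "bop Y Z F"
  using assms unfolding bop_def by blast

lemma bop_in: "bop Y Z F \<Longrightarrow> x \<in> Y \<Longrightarrow> F x \<in> Z" by (simp add: bop_def)
lemma bop_add: "bop Y Z F \<Longrightarrow> x \<in> Y \<Longrightarrow> y \<in> Y \<Longrightarrow> F (x+y) = F x + F y" by (simp add: bop_def)
lemma bop_scaleR: "bop Y Z F \<Longrightarrow> x \<in> Y \<Longrightarrow> F (c *\<^sub>R x) = c *\<^sub>R F x" by (simp add: bop_def)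
lemma bop_bound: "bop Y Z F \<Longrightarrow> \<exists>M\<ge>0. \<forall>x\<in>Y. norm (F x) \<le> M * norm x"
proof -
  assume "bop Y Z F"
  then obtain M where M: "\<forall>x\<in>Y. norm (F x) \<le> M * norm x" by (auto simp: bop_def)
  show ?thesis
  proof (intro exI[of _ "max M 0"] conjI ballI)
    fix x assume "x \<in> Y"
    then have "norm (F x) \<le> M * norm x" using M by blast
    also have "\<dots> \<le> max M 0 * norm x" by (intro mult_right_mono) auto
    finally show "norm (F x) \<le> max M 0 * norm x" .
  qed auto
qed

lemma bop_zero: "bop Y Z F \<Longrightarrow> x \<in> Y \<Longrightarrow> F 0 = 0"
  using bop_scaleR[of Y Z F x 0] by simp

lemma bop_diff: "csubspace J Y \<Longrightarrow> bop Y Z F \<Longrightarrow> x \<in> Y \<Longrightarrow> y \<in> Y \<Longrightarrow> F (x - y) = F x - F y"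
  using bop_add[of Y Z F x "(-1) *\<^sub>R y"] bop_scaleR[of Y Z F y "-1"] csub_scaleR[of J Y y "-1"]
  by simp

lemma bop_sum:
  assumes Y: "csubspace J Y" and F: "bop Y Z F"
  shows "finite S \<Longrightarrow> (\<forall>j\<in>S. u j \<in> Y) \<Longrightarrow> F (sum u S) = (\<Sum>j\<in>S. F (u j))"
proof (induction S rule: finite_induct)
  case empty then show ?case using bop_zero[OF F, of 0] csub_zero[OF Y] by simp
next
  case (insert x S)
  then show ?case using bop_add[OF F, of "u x" "sum u S"] csub_sum[OF Y, of S u] by simp
qed

lemma bop_comp: "bop Y Z F \<Longrightarrow> bop Z W G \<Longrightarrow> bop Y W (\<lambda>x. G (F x))"
proof -
  assume F: "bop Y Z F" and G: "bop Z W G"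
  obtain M where M: "M \<ge> 0" "\<forall>x\<in>Y. norm (F x) \<le> M * norm x" using bop_bound[OF F] by blast
  obtain N where N: "N \<ge> 0" "\<forall>x\<in>Z. norm (G x) \<le> N * norm x" using bop_bound[OF G] by blast
  show ?thesis
  proof (rule bopI[where M="N*M"])
    fix x assume x: "x \<in> Y"
    have "norm (G (F x)) \<le> N * norm (F x)" using N bop_in[OF F x] by blast
    also have "\<dots> \<le> N * (M * norm x)" using M x N by (intro mult_left_mono) auto
    finally show "norm (G (F x)) \<le> N * M * norm x" by simp
  qed (use F G in \<open>auto simp: bop_in bop_add bop_scaleR\<close>)
qed

lemma bop_plus: "csubspace J W \<Longrightarrow> bop Y W F \<Longrightarrow> bop Y W G \<Longrightarrow> bop Y W (\<lambda>x. F x + G x)"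
proof -
  assume W: "csubspace J W" and F: "bop Y W F" and G: "bop Y W G"
  obtain M where M: "M \<ge> 0" "\<forall>x\<in>Y. norm (F x) \<le> M * norm x" using bop_bound[OF F] by blast
  obtain N where N: "N \<ge> 0" "\<forall>x\<in>Y. norm (G x) \<le> N * norm x" using bop_bound[OF G] by blast
  show ?thesis
  proof (rule bopI[where M="M+N"])
    fix x assume x: "x \<in> Y"
    have "norm (F x + G x) \<le> norm (F x) + norm (G x)" by (rule norm_triangle_ineq)
    also have "\<dots> \<le> M * norm x + N * norm x" using M N x by (intro add_mono) auto
    finally show "norm (F x + G x) \<le> (M + N) * norm x" by (simp add: distrib_right)
  qed (use F G W in \<open>auto simp: bop_in bop_add bop_scaleR csub_add scaleR_add_right\<close>)
qed

lemma bop_const0: "csubspace J W \<Longrightarrow> bop Y W (\<lambda>x. 0)"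
  by (rule bopI[where M=0]) (auto simp: csub_zero)

lemma bop_if: "csubspace J W \<Longrightarrow> bop Y W F \<Longrightarrow> bop Y W (\<lambda>x. if b then 0 else F x)"
  using bop_const0[of J W Y] by (cases b) auto

lemma bop_opnorm:
  assumes Y: "csubspace J Y" and F: "bop Y Z F" and x: "x \<in> Y"
  shows "norm (F x) \<le> op_norm Y F * norm x"
proof (cases "x = 0")
  case True then show ?thesis using bop_zero[OF F x] by simp
next
  case False
  obtain M where M: "M \<ge> 0" "\<forall>x\<in>Y. norm (F x) \<le> M * norm x" using bop_bound[OF F] by blast
  have bdd: "bdd_above ((\<lambda>x. norm (F x)) ` {x \<in> Y. norm x \<le> 1})"
    unfolding bdd_above_def
  proof (intro exI[of _ M] ballI)
    fix t assume "t \<in> (\<lambda>x. norm (F x)) ` {x \<in> Y. norm x \<le> 1}"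
    then obtain u where u: "u \<in> Y" "norm u \<le> 1" "t = norm (F u)" by auto
    have "norm (F u) \<le> M * norm u" using M u by blast
    also have "\<dots> \<le> M * 1" using M u by (intro mult_left_mono) auto
    finally show "t \<le> M" using u by simp
  qed
  define u where "u = (1 / norm x) *\<^sub>R x"
  have u: "u \<in> Y" "norm u \<le> 1" using csub_scaleR[OF Y x] False by (auto simp: u_def)
  have "norm (F u) \<le> op_norm Y F"
    unfolding op_norm_def by (rule cSup_upper[OF _ bdd]) (use u in auto)
  moreover have "norm (F u) = norm (F x) / norm x"
    using bop_scaleR[OF F x] by (simp add: u_def)
  ultimately show ?thesis using False by (simp add: divide_le_eq mult.commute)
qed

lemma bop_combine:
  assumes "finite S" "\<forall>j\<in>S. bop (Y j) (Z j) (F j)"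
  shows "\<exists>M\<ge>0. \<forall>j\<in>S. \<forall>x\<in>Y j. norm (F j x) \<le> M * norm x"
  using assms
proof (induction S rule: finite_induct)
  case empty then show ?case by auto
next
  case (insert a S)
  then obtain M where M: "M \<ge> 0" "\<forall>j\<in>S. \<forall>x\<in>Y j. norm (F j x) \<le> M * norm x" by auto
  obtain N where N: "N \<ge> 0" "\<forall>x\<in>Y a. norm (F a x) \<le> N * norm x" using bop_bound insert by blast
  show ?case
  proof (intro exI[of _ "max M N"] conjI ballI)
    fix j x assume j: "j \<in> insert a S" and x: "x \<in> Y j"
    show "norm (F j x) \<le> max M N * norm x"
    proof (cases "j = a")
      case True
      then have "norm (F j x) \<le> N * norm x" using N x by blast
      also have "\<dots> \<le> max M N * norm x" by (intro mult_right_mono) auto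
      finally show ?thesis .
    next
      case False
      then have "norm (F j x) \<le> M * norm x" using M x j by blast
      also have "\<dots> \<le> max M N * norm x" by (intro mult_right_mono) auto
      finally show ?thesis .
    qed
  qed (use M in auto)
qed




lemma lin_dom: "lin_op J Y Z D T \<Longrightarrow> csubspace J D" by (simp add: lin_op_def)
lemma lin_sub: "lin_op J Y Z D T \<Longrightarrow> x \<in> D \<Longrightarrow> x \<in> Y" by (auto simp: lin_op_def)
lemma lin_in: "lin_op J Y Z D T \<Longrightarrow> x \<in> D \<Longrightarrow> T x \<in> Z" by (auto simp: lin_op_def)
lemma lin_add: "lin_op J Y Z D T \<Longrightarrow> x \<in> D \<Longrightarrow> y \<in> D \<Longrightarrow> T (x + y) = T x + T y" by (auto simp: lin_op_def)
lemma lin_scaleR: "lin_op J Y Z D T \<Longrightarrow> x \<in> D \<Longrightarrow> T (c *\<^sub>R x) = c *\<^sub>R T x"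
  unfolding lin_op_def using cscale_real[of J c] by metis

locale resolv =
  fixes J :: "'a::banach \<Rightarrow> 'a" and Y D :: "'a set" and T :: "'a \<Rightarrow> 'a" and l :: complex
  assumes J: "complex_structure J" and Y: "csubspace J Y" and T: "lin_op J Y Y D T"
    and inv: "bdd_invertible Y D (\<lambda>x. cscale J l x - T x) norm"
begin

abbreviation "S \<equiv> (\<lambda>x. cscale J l x - T x)"
abbreviation "R \<equiv> resolvent J D T l"

lemma bij: "bij_betw S D Y" using inv by (simp add: bdd_invertible_def)

lemma res_in_eq: assumes "y \<in> Y" shows "R y \<in> D \<and> S (R y) = y"
proof -
  obtain x where x: "x \<in> D" "S x = y" using bij assms unfolding bij_betw_def by force
  have "R y = x" unfolding resolvent_def
  proof (rule the_equality)
    show "x \<in> D \<and> S x = y" using x by simp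
    fix x' assume "x' \<in> D \<and> S x' = y"
    then show "x' = x" using x bij unfolding bij_betw_def inj_on_def by metis
  qed
  then show ?thesis using x by simp
qed

lemma res_in: "y \<in> Y \<Longrightarrow> R y \<in> D" using res_in_eq by blast
lemma res_eq: "y \<in> Y \<Longrightarrow> cscale J l (R y) - T (R y) = y" using res_in_eq by blast

lemma S_in: "x \<in> D \<Longrightarrow> S x \<in> Y" using bij unfolding bij_betw_def by blast

lemma res_inv: assumes "x \<in> D" shows "R (cscale J l x - T x) = x"
proof -
  have "R (S x) \<in> D" "S (R (S x)) = S x" using res_in_eq S_in assms by auto
  then show ?thesis using bij assms unfolding bij_betw_def inj_on_def by metis
qed

lemma Dsub: "csubspace J D" using T by (rule lin_dom)

lemma S_add: "x \<in> D \<Longrightarrow> y \<in> D \<Longrightarrow> S (x + y) = S x + S y"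
  using lin_add[OF T] cscale_add[OF J] by simp

lemma S_scaleR: "x \<in> D \<Longrightarrow> S (c *\<^sub>R x) = c *\<^sub>R S x"
  using lin_scaleR[OF T] cscale_scaleR[OF J] by (simp add: scaleR_diff_right)

lemma R_bop: "bop Y D R"
proof -
  obtain C where C: "\<forall>x\<in>D. norm x \<le> C * norm (S x)" using inv by (auto simp: bdd_invertible_def)
  show ?thesis
  proof (rule bopI[where M=C])
    fix x assume "x \<in> Y" then show "R x \<in> D" by (rule res_in)
  next
    fix x y assume x: "x \<in> Y" and y: "y \<in> Y"
    have "S (R x + R y) = x + y" using S_add res_in res_eq x y by simp
    then have "R (S (R x + R y)) = R (x + y)" by simp
    then show "R (x + y) = R x + R y"
      using res_inv csub_add[OF Dsub] res_in x y by metis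
  next
    fix c x assume x: "x \<in> Y"
    have "S (c *\<^sub>R R x) = c *\<^sub>R x" using S_scaleR res_in res_eq x by simp
    then show "R (c *\<^sub>R x) = c *\<^sub>R R x"
      using res_inv csub_scaleR[OF Dsub] res_in x by metis
  next
    fix x assume x: "x \<in> Y"
    show "norm (R x) \<le> C * norm x" using C res_in[OF x] res_eq[OF x] by metis
  qed
qed

lemma TR_eq: "y \<in> Y \<Longrightarrow> T (R y) = cscale J l (R y) - y"
  using res_eq by (metis add_diff_cancel_left' diff_add_cancel)

lemma TR_bop: "bop Y Y (\<lambda>y. T (R y))"
proof -
  obtain C where C: "C \<ge> 0" "\<forall>x\<in>Y. norm (R x) \<le> C * norm x" using bop_bound[OF R_bop] by blast
  show ?thesis
  proof (rule bopI[where M="cmod l * C + 1"])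
    fix x assume x: "x \<in> Y" then show "T (R x) \<in> Y" using lin_in[OF T] res_in by blast
  next
    fix x y assume x: "x \<in> Y" and y: "y \<in> Y"
    show "T (R (x + y)) = T (R x) + T (R y)"
      using bop_add[OF R_bop x y] lin_add[OF T] res_in x y by simp
  next
    fix c x assume x: "x \<in> Y"
    show "T (R (c *\<^sub>R x)) = c *\<^sub>R T (R x)"
      using bop_scaleR[OF R_bop x] lin_scaleR[OF T] res_in x by simp
  next
    fix x assume x: "x \<in> Y"
    have "norm (T (R x)) \<le> norm (cscale J l (R x)) + norm x"
      using TR_eq[OF x] by (metis norm_triangle_ineq4)
    also have "\<dots> = cmod l * norm (R x) + norm x" using cscale_norm[OF J] by simp
    also have "\<dots> \<le> cmod l * (C * norm x) + norm x" using C x by (intro add_mono mult_left_mono) auto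
    finally show "norm (T (R x)) \<le> (cmod l * C + 1) * norm x" by (simp add: algebra_simps)
  qed
qed

lemma relb_bop:
  assumes rb: "rel_bounded DB B D T" and B: "lin_op J W Z DB B"
  shows "bop Y Z (\<lambda>y. B (R y))"
proof -
  obtain \<alpha> \<beta> where ab: "\<alpha> \<ge> 0" "\<beta> \<ge> 0" "\<forall>x\<in>D. norm (B x) \<le> \<alpha> * norm x + \<beta> * norm (T x)"
    and DDB: "D \<subseteq> DB" using rb by (auto simp: rel_bounded_def)
  obtain C where C: "C \<ge> 0" "\<forall>x\<in>Y. norm (R x) \<le> C * norm x" using bop_bound[OF R_bop] by blast
  obtain E where E: "E \<ge> 0" "\<forall>x\<in>Y. norm (T (R x)) \<le> E * norm x" using bop_bound[OF TR_bop] by blast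
  show ?thesis
  proof (rule bopI[where M="\<alpha> * C + \<beta> * E"])
    fix x assume x: "x \<in> Y" then show "B (R x) \<in> Z" using lin_in[OF B] res_in DDB by blast
  next
    fix x y assume x: "x \<in> Y" and y: "y \<in> Y"
    show "B (R (x + y)) = B (R x) + B (R y)"
      using bop_add[OF R_bop x y] lin_add[OF B] res_in x y DDB by auto
  next
    fix c x assume x: "x \<in> Y"
    show "B (R (c *\<^sub>R x)) = c *\<^sub>R B (R x)"
      using bop_scaleR[OF R_bop x] lin_scaleR[OF B] res_in x DDB by (simp add: subsetD)
  next
    fix x assume x: "x \<in> Y"
    have "norm (B (R x)) \<le> \<alpha> * norm (R x) + \<beta> * norm (T (R x))" using ab res_in[OF x] by blast
    also have "\<dots> \<le> \<alpha> * (C * norm x) + \<beta> * (E * norm x)"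
      using C E ab x by (intro add_mono mult_left_mono) auto
    finally show "norm (B (R x)) \<le> (\<alpha> * C + \<beta> * E) * norm x" by (simp add: algebra_simps)
  qed
qed

end




lemma prod_norm_add_le: "prod_norm m (\<lambda>i. a i + b i) \<le> prod_norm m a + prod_norm m b"
  unfolding prod_norm_def sum.distrib[symmetric] by (intro sum_mono norm_triangle_ineq)

lemma main_inv:
  fixes J :: "'a::banach \<Rightarrow> 'a" and X :: "nat \<Rightarrow> 'a set" and n :: nat
    and D :: "nat \<Rightarrow> nat \<Rightarrow> 'a set" and A :: "nat \<Rightarrow> nat \<Rightarrow> 'a \<Rightarrow> 'a"
  assumes m: "m \<ge> 1" and nm: "n = Suc m"
    and opm: "op_matrix J X n D A"
    and lj: "\<forall>j\<in>{1..m}. l \<notin> op_spectrum J (X n) (D n n) (A n n) \<and> l \<notin> op_spectrum J (X j) (D j j) (A j j)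
              \<and> schur_R J X n D A n j l < 1"
  shows "bdd_invertible (prod_space X n) (mat_dom n D)
      (\<lambda>x. (\<lambda>i. if i \<in> {1..n} then cscale J l (x i) else 0) - mat_op n A x) (prod_norm n)"
proof -
  have cs: "complex_structure J" using opm by (simp add: op_matrix_def)
  have Xs: "csubspace J (X i)" "closed (X i)" if "i \<in> {1..n}" for i
    using opm that by (auto simp: op_matrix_def cbanach_def)
  have lin: "lin_op J (X j) (X i) (D i j) (A i j)" if "i \<in> {1..n}" "j \<in> {1..n}" for i j
    using opm that by (auto simp: op_matrix_def)
  have rb: "rel_bounded (D i j) (A i j) (D j j) (A j j)" if "i \<in> {1..n}" "j \<in> {1..n}" "i \<noteq> j" for i j
    using opm that by (auto simp: op_matrix_def)
  have mn: "{1..m} \<subseteq> {1..n}" "n \<in> {1..n}" "n \<notin> {1..m}" using nm by auto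
  have XsM: "csubspace J (X j)" if "j \<in> {1..m}" for j using Xs(1) that mn by auto
  have nsplit: "{1..n} = insert n {1..m}" using nm by auto
  have nminus: "{1..n} - {n} = {1..m}" using nm by auto
  have rs: "resolv J (X j) (D j j) (A j j) l" if "j \<in> {1..n}" for j
  proof -
    have "l \<notin> op_spectrum J (X j) (D j j) (A j j)"
    proof (cases "j = n")
      case True then show ?thesis using lj m by auto
    next
      case False then show ?thesis using lj that nm by auto
    qed
    then show ?thesis using cs Xs[OF that] lin[OF that that]
      by (unfold_locales) (auto simp: op_spectrum_def)
  qed
  define R where "R j = resolvent J (D j j) (A j j) l" for j
  have Rin: "R j y \<in> D j j" if "j \<in> {1..n}" "y \<in> X j" for j y
    using resolv.res_in[OF rs[OF that(1)] that(2)] by (simp add: R_def)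
  have Req: "cscale J l (R j y) - A j j (R j y) = y" if "j \<in> {1..n}" "y \<in> X j" for j y
    using resolv.res_eq[OF rs[OF that(1)] that(2)] by (simp add: R_def)
  have Rinv: "R j (cscale J l x - A j j x) = x" if "j \<in> {1..n}" "x \<in> D j j" for j x
    using resolv.res_inv[OF rs[OF that(1)] that(2)] by (simp add: R_def)
  have Rbop: "bop (X j) (D j j) (R j)" if "j \<in> {1..n}" for j
    using resolv.R_bop[OF rs[OF that]] by (simp add: R_def)
  have DX: "D j j \<subseteq> X j" if "j \<in> {1..n}" for j using lin_sub[OF lin[OF that that]] by blast
  have Dsub: "csubspace J (D j j)" if "j \<in> {1..n}" for j using lin_dom[OF lin[OF that that]] .
  have Bbop: "bop (X j) (X i) (\<lambda>y. A i j (R j y))" if "i \<in> {1..n}" "j \<in> {1..n}" "i \<noteq> j" for i j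
    using resolv.relb_bop[OF rs[OF that(2)] rb[OF that] lin[OF that(1,2)]] by (simp add: R_def)
  define K where "K i j = (\<lambda>x. A i n (R n (A n j (R j x))) + (if i = j then 0 else A i j (R j x)))" for i j
  have Kbop: "bop (X j) (X i) (K i j)" if "i \<in> {1..m}" "j \<in> {1..m}" for i j
  proof -
    have i: "i \<in> {1..n}" "i \<noteq> n" and j: "j \<in> {1..n}" "j \<noteq> n" using that nm by auto
    have "bop (X j) (X i) (\<lambda>x. if i = j then 0 else A i j (R j x))"
      using bop_const0[OF Xs(1)[OF i(1)]] Bbop i j by (cases "i = j") auto
    moreover have "bop (X j) (X i) (\<lambda>x. A i n (R n (A n j (R j x))))"
      by (rule bop_comp[OF Bbop[OF mn(2) j(1) j(2)[symmetric]] Bbop[OF i(1) mn(2) i(2)]])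
    ultimately show ?thesis unfolding K_def by (intro bop_plus[OF Xs(1)[OF i(1)]])
  qed
  have schur_eq: "schur_R J X n D A n j l = (\<Sum>i\<in>{1..m}. op_norm (X j) (K i j))" for j
    unfolding schur_R_def nminus K_def R_def ..
  define q where "q = max 0 (Max ((\<lambda>j. schur_R J X n D A n j l) ` {1..m}))"
  have q: "0 \<le> q" "q < 1" "\<And>j. j \<in> {1..m} \<Longrightarrow> schur_R J X n D A n j l \<le> q"
  proof -
    have ne: "{1..m} \<noteq> {}" using m by auto
    show "0 \<le> q" by (simp add: q_def)
    show "q < 1" using lj ne by (simp add: q_def Max_less_iff)
    fix j assume "j \<in> {1..m}"
    then have "schur_R J X n D A n j l \<le> Max ((\<lambda>j. schur_R J X n D A n j l) ` {1..m})"
      by (intro Max_ge) auto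
    then show "schur_R J X n D A n j l \<le> q" by (simp add: q_def)
  qed
  define P where "P = prod_space X m"
  define KK where "KK y = (\<lambda>i. if i \<in> {1..m} then (\<Sum>j=1..m. K i j (y j)) else 0)" for y
  have Pin: "y j \<in> X j" if "y \<in> P" "j \<in> {1..m}" for y j using that by (simp add: P_def prod_space_def)
  have Pout: "y j = 0" if "y \<in> P" "j \<notin> {1..m}" for y j using that by (simp add: P_def prod_space_def)
  have KKP: "KK u \<in> P" if u: "u \<in> P" for u
    unfolding P_def prod_space_def KK_def
  proof safe
    fix i assume i: "i \<in> {1..m}"
    have "csubspace J (X i)" using Xs(1) i mn by auto
    then show "(if i \<in> {1..m} then \<Sum>j = 1..m. K i j (u j) else 0) \<in> X i"
      using i bop_in[OF Kbop] Pin[OF u] by (auto intro!: csub_sum)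
  qed auto
  have KKb: "prod_norm m (KK u) \<le> q * prod_norm m u" if u: "u \<in> P" for u
  proof -
    have "prod_norm m (KK u) = (\<Sum>i=1..m. norm (\<Sum>j=1..m. K i j (u j)))"
      unfolding prod_norm_def KK_def by simp
    also have "\<dots> \<le> (\<Sum>i=1..m. \<Sum>j=1..m. norm (K i j (u j)))"
      by (intro sum_mono norm_sum)
    also have "\<dots> \<le> (\<Sum>i=1..m. \<Sum>j=1..m. op_norm (X j) (K i j) * norm (u j))"
      using Pin[OF u] by (intro sum_mono bop_opnorm[OF XsM Kbop]) auto
    also have "\<dots> = (\<Sum>j=1..m. schur_R J X n D A n j l * norm (u j))"
      unfolding schur_eq sum_distrib_right by (rule sum.swap)
    also have "\<dots> \<le> (\<Sum>j=1..m. q * norm (u j))"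
      using q by (intro sum_mono mult_right_mono) auto
    finally show ?thesis by (simp add: prod_norm_def sum_distrib_left)
  qed
  have Pdiff: "u - v \<in> P" if "u \<in> P" "v \<in> P" for u v
    using that XsM by (auto simp: P_def prod_space_def intro!: csub_diff[of J])
  have KKc: "prod_norm m (KK u - KK v) \<le> q * prod_norm m (u - v)" if u: "u \<in> P" and v: "v \<in> P" for u v
  proof -
    have "prod_norm m (KK u - KK v) = prod_norm m (KK (u - v))"
      unfolding prod_norm_def
    proof (rule sum.cong)
      fix i assume i: "i \<in> {1..m}"
      have "(\<Sum>j=1..m. K i j (u j)) - (\<Sum>j=1..m. K i j (v j)) = (\<Sum>j=1..m. K i j (u j - v j))"
        unfolding sum_subtractf[symmetric]
        using bop_diff[OF XsM Kbop[OF i]] Pin[OF u] Pin[OF v] by (intro sum.cong) auto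
      then show "norm ((KK u - KK v) i) = norm (KK (u - v) i)" using i by (simp add: KK_def)
    qed simp
    then show ?thesis using KKb[OF Pdiff[OF u v]] by simp
  qed
  define T where "T = (\<lambda>x::nat\<Rightarrow>'a. (\<lambda>i. if i \<in> {1..n} then cscale J l (x i) else 0) - mat_op n A x)"
  define MD where "MD = mat_dom n D"
  define W where "W z = (\<lambda>i. if i \<in> {1..m} then z i + A i n (R n (z n)) else 0)" for z
  have Tapp: "T x i = (if i \<in> {1..n} then cscale J l (x i) - (\<Sum>j=1..n. A i j (x j)) else 0)" for x i
    by (simp add: T_def mat_op_def)
  have MDin: "x j \<in> D j j" if "x \<in> MD" "j \<in> {1..n}" for x j
    using that by (simp add: MD_def mat_dom_def prod_space_def)
  have MDout: "x j = 0" if "x \<in> MD" "j \<notin> {1..n}" for x j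
    using that by (simp add: MD_def mat_dom_def prod_space_def)
  have DD: "D j j \<subseteq> D i j" if "i \<in> {1..n}" "j \<in> {1..n}" for i j
    using rb[OF that] by (cases "i = j") (auto simp: rel_bounded_def)
  have Aij_in: "A i j (x j) \<in> X i" if "x \<in> MD" "i \<in> {1..n}" "j \<in> {1..n}" for x i j
    using lin_in[OF lin[OF that(2,3)]] DD[OF that(2,3)] MDin[OF that(1,3)] by blast
  have Tin: "T x \<in> prod_space X n" if x: "x \<in> MD" for x
    unfolding prod_space_def
  proof safe
    fix i assume i: "i \<in> {1..n}"
    have "cscale J l (x i) \<in> X i" using csub_cscale[OF Xs(1)[OF i]] DX[OF i] MDin[OF x i] by blast
    moreover have "(\<Sum>j=1..n. A i j (x j)) \<in> X i" using Aij_in[OF x i] by (intro csub_sum[OF Xs(1)[OF i]]) auto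
    ultimately show "T x i \<in> X i" using i Tapp csub_diff[OF Xs(1)[OF i]] by simp
  qed (auto simp: Tapp)
  have Tn: "T x n = cscale J l (x n) - A n n (x n) - (\<Sum>j\<in>{1..m}. A n j (x j))" for x
    using Tapp[of x n] mn unfolding nsplit by (simp add: sum.insert)
  have Ti: "T x i = cscale J l (x i) - A i i (x i) - (\<Sum>j\<in>{1..m}-{i}. A i j (x j)) - A i n (x n)"
    if i: "i \<in> {1..m}" for x i
  proof -
    have "(\<Sum>j=1..n. A i j (x j)) = A i n (x n) + (A i i (x i) + (\<Sum>j\<in>{1..m}-{i}. A i j (x j)))"
    proof -
      have "(\<Sum>j\<in>{1..m}. A i j (x j)) = A i i (x i) + (\<Sum>j\<in>{1..m}-{i}. A i j (x j))"
        by (rule sum.remove) (use i in auto)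
      then show ?thesis unfolding nsplit using mn by (simp add: sum.insert)
    qed
    then show ?thesis using Tapp[of x i] i mn by (auto simp: algebra_simps)
  qed
  have KKexp: "KK u i = (\<Sum>j\<in>{1..m}. A i n (R n (A n j (R j (u j))))) + (\<Sum>j\<in>{1..m}-{i}. A i j (R j (u j)))"
    if i: "i \<in> {1..m}" for u i
  proof -
    have "(\<Sum>j\<in>{1..m}. (if i = j then 0 else A i j (R j (u j)))) = (\<Sum>j\<in>{1..m}-{i}. A i j (R j (u j)))"
    proof -
      have e1: "(\<Sum>j\<in>{1..m}. (if i = j then 0 else A i j (R j (u j)))) = (if i = i then 0 else A i i (R i (u i))) + (\<Sum>j\<in>{1..m}-{i}. (if i = j then 0 else A i j (R j (u j))))"
        by (rule sum.remove) (use i in auto)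
      have e2: "(\<Sum>j\<in>{1..m}-{i}. (if i = j then 0 else A i j (R j (u j)))) = (\<Sum>j\<in>{1..m}-{i}. A i j (R j (u j)))"
        by (rule sum.cong) auto
      show ?thesis using e1 e2 by simp
    qed
    then show ?thesis using i by (simp add: KK_def K_def sum.distrib)
  qed
  have Ainexp: "A i n (R n (v + (\<Sum>j\<in>{1..m}. A n j (R j (u j)))))
       = A i n (R n v) + (\<Sum>j\<in>{1..m}. A i n (R n (A n j (R j (u j)))))"
    if i: "i \<in> {1..m}" and u: "u \<in> P" and v: "v \<in> X n" for i u v
  proof -
    have i': "i \<in> {1..n}" "i \<noteq> n" using i nm by auto
    have G: "bop (X n) (X i) (\<lambda>y. A i n (R n y))" by (rule Bbop[OF i'(1) mn(2) i'(2)])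
    have inX: "A n j (R j (u j)) \<in> X n" if "j \<in> {1..m}" for j
      using bop_in[OF Bbop[OF mn(2), of j] Pin[OF u that]] that mn nm by auto
    have s: "(\<Sum>j\<in>{1..m}. A n j (R j (u j))) \<in> X n" using inX by (intro csub_sum[OF Xs(1)[OF mn(2)]]) auto
    show ?thesis
      using bop_add[OF G v s] bop_sum[OF Xs(1)[OF mn(2)] G, of "{1..m}" "\<lambda>j. A n j (R j (u j))"] inX by simp
  qed
  define Yr where "Yr x = (\<lambda>j. if j \<in> {1..m} then cscale J l (x j) - A j j (x j) else 0)" for x
  have mnj: "j \<in> {1..n}" if "j \<in> {1..m}" for j using that mn by auto
  have YrP: "Yr x \<in> P" if x: "x \<in> MD" for x
    unfolding P_def prod_space_def
  proof safe
    fix j assume j: "j \<in> {1..m}"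
    have xj: "x j \<in> D j j" by (rule MDin[OF x mnj[OF j]])
    have "cscale J l (x j) \<in> X j" using csub_cscale[OF XsM[OF j]] DX[OF mnj[OF j]] xj by blast
    moreover have "A j j (x j) \<in> X j" using lin_in[OF lin[OF mnj[OF j] mnj[OF j]] xj] .
    ultimately show "Yr x j \<in> X j" using j csub_diff[OF XsM[OF j]] by (simp add: Yr_def)
  qed (auto simp: Yr_def)
  have Yrx: "x j = R j (Yr x j)" if x: "x \<in> MD" and j: "j \<in> {1..m}" for x j
    using Rinv[OF mnj[OF j] MDin[OF x mnj[OF j]]] j by (simp add: Yr_def)
  have Yrn: "x n = R n (T x n + (\<Sum>j\<in>{1..m}. A n j (x j)))" if x: "x \<in> MD" for x
  proof -
    have "T x n + (\<Sum>j\<in>{1..m}. A n j (x j)) = cscale J l (x n) - A n n (x n)" using Tn[of x] by simp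
    then show ?thesis using Rinv[OF mn(2) MDin[OF x mn(2)]] by simp
  qed
  have Tnin: "T x n \<in> X n" if x: "x \<in> MD" for x using Tin[OF x] mn by (simp add: prod_space_def)
  have Yrfix: "Yr x = (\<lambda>i. W (T x) i + KK (Yr x) i)" if x: "x \<in> MD" for x
  proof
    fix i show "Yr x i = W (T x) i + KK (Yr x) i"
    proof (cases "i \<in> {1..m}")
      case False then show ?thesis by (auto simp: Yr_def W_def KK_def)
    next
      case i: True
      have s1: "(\<Sum>j\<in>{1..m}. A i n (R n (A n j (R j (Yr x j))))) = (\<Sum>j\<in>{1..m}. A i n (R n (A n j (x j))))"
        using Yrx[OF x] by (intro sum.cong) auto
      have s2: "(\<Sum>j\<in>{1..m}-{i}. A i j (R j (Yr x j))) = (\<Sum>j\<in>{1..m}-{i}. A i j (x j))"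
        using Yrx[OF x] by (intro sum.cong) auto
      have s3: "(\<Sum>j\<in>{1..m}. A n j (R j (Yr x j))) = (\<Sum>j\<in>{1..m}. A n j (x j))"
        using Yrx[OF x] by (intro sum.cong) auto
      have "A i n (x n) = A i n (R n (T x n)) + (\<Sum>j\<in>{1..m}. A i n (R n (A n j (x j))))"
        using Ainexp[OF i YrP[OF x] Tnin[OF x]] Yrn[OF x] s1 s3 by simp
      then show ?thesis using Ti[OF i, of x] KKexp[OF i, of "Yr x"] s1 s2 i
        by (simp add: Yr_def W_def algebra_simps)
    qed
  qed
  obtain M1 where M1: "M1 \<ge> 0" "\<forall>j\<in>{1..n}. \<forall>x\<in>X j. norm (R j x) \<le> M1 * norm x"
    using bop_combine[of "{1..n}" X "\<lambda>j. D j j" R] Rbop by auto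
  obtain M2 where M2: "M2 \<ge> 0" "\<forall>j\<in>{1..m}. \<forall>x\<in>X j. norm (A n j (R j x)) \<le> M2 * norm x"
    using bop_combine[of "{1..m}" X "\<lambda>j. X n" "\<lambda>j y. A n j (R j y)"] Bbop[OF mn(2) mnj] mn(3)
    by (metis finite_atLeastAtMost)
  obtain M3 where M3: "M3 \<ge> 0" "\<forall>i\<in>{1..m}. \<forall>x\<in>X n. norm (A i n (R n x)) \<le> M3 * norm x"
    using bop_combine[of "{1..m}" "\<lambda>i. X n" X "\<lambda>i y. A i n (R n y)"] Bbop[OF mnj mn(2)] mn(3)
    by (metis finite_atLeastAtMost)
  define M where "M = M1 + M2 + M3"
  have M0: "M \<ge> 0" using M1 M2 M3 by (simp add: M_def)
  have le_M: "a * t \<le> M * t" if "a \<in> {M1, M2, M3}" "t \<ge> 0" for a t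
    using that M1 M2 M3 by (intro mult_right_mono) (auto simp: M_def)
  have RM: "norm (R j x) \<le> M * norm x" if "j \<in> {1..n}" "x \<in> X j" for j x
    using M1(2) that le_M[of M1 "norm x"] by force
  have BnM: "norm (A n j (R j x)) \<le> M * norm x" if "j \<in> {1..m}" "x \<in> X j" for j x
    using M2(2) that le_M[of M2 "norm x"] by force
  have BinM: "norm (A i n (R n x)) \<le> M * norm x" if "i \<in> {1..m}" "x \<in> X n" for i x
    using M3(2) that le_M[of M3 "norm x"] by force
  have pn_split: "prod_norm n u = norm (u n) + (\<Sum>j\<in>{1..m}. norm (u j))" for u
    unfolding prod_norm_def nsplit using mn by (simp add: sum.insert)
  define C where "C = (M + M * M) * ((1 + real m * M) / (1 - q)) + M"
  have est: "prod_norm n x \<le> C * prod_norm n (T x)" if x: "x \<in> MD" for x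
  proof -
    define z where "z = T x"
    define y where "y = Yr x"
    have yP: "y \<in> P" using YrP[OF x] by (simp add: y_def)
    have zn: "z n \<in> X n" using Tnin[OF x] by (simp add: z_def)
    have zP: "z \<in> prod_space X n" using Tin[OF x] by (simp add: z_def)
    have pz: "norm (z n) \<le> prod_norm n z" "(\<Sum>j\<in>{1..m}. norm (z j)) \<le> prod_norm n z"
      using pn_split[of z] sum_nonneg[of "{1..m}" "\<lambda>j. norm (z j)"] by auto
    have "prod_norm m y = prod_norm m (\<lambda>i. W z i + KK y i)"
      using Yrfix[OF x] unfolding y_def z_def by metis
    also have "\<dots> \<le> prod_norm m (W z) + prod_norm m (KK y)" by (rule prod_norm_add_le)
    also have "\<dots> \<le> prod_norm m (W z) + q * prod_norm m y" using KKb[OF yP] by simp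
    finally have e1: "(1 - q) * prod_norm m y \<le> prod_norm m (W z)" by (simp add: algebra_simps)
    have "prod_norm m (W z) = (\<Sum>i\<in>{1..m}. norm (z i + A i n (R n (z n))))"
      unfolding prod_norm_def W_def by simp
    also have "\<dots> \<le> (\<Sum>i\<in>{1..m}. norm (z i) + M * norm (z n))"
      using BinM zn by (intro sum_mono order_trans[OF norm_triangle_ineq] add_left_mono) auto
    also have "\<dots> = (\<Sum>i\<in>{1..m}. norm (z i)) + real m * (M * norm (z n))"
      by (simp add: sum.distrib)
    also have "\<dots> \<le> prod_norm n z + real m * (M * prod_norm n z)"
      using pz M0 by (intro add_mono mult_left_mono) auto
    finally have e2: "prod_norm m (W z) \<le> (1 + real m * M) * prod_norm n z" by (simp add: algebra_simps)
    have e3: "prod_norm m y \<le> (1 + real m * M) / (1 - q) * prod_norm n z"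
      using e1 e2 q by (simp add: pos_le_divide_eq mult.commute)
    have sx: "(\<Sum>j\<in>{1..m}. norm (x j)) \<le> M * prod_norm m y"
    proof -
      have "(\<Sum>j\<in>{1..m}. norm (x j)) = (\<Sum>j\<in>{1..m}. norm (R j (y j)))"
        using Yrx[OF x] by (intro sum.cong) (auto simp: y_def)
      also have "\<dots> \<le> (\<Sum>j\<in>{1..m}. M * norm (y j))"
        using RM mnj Pin[OF yP] by (intro sum_mono) auto
      finally show ?thesis by (simp add: prod_norm_def sum_distrib_left)
    qed
    have sB: "(\<Sum>j\<in>{1..m}. A n j (x j)) \<in> X n"
      using Aij_in[OF x mn(2) mnj] by (intro csub_sum[OF Xs(1)[OF mn(2)]]) auto
    have "norm (x n) = norm (R n (z n + (\<Sum>j\<in>{1..m}. A n j (x j))))"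
      using Yrn[OF x] by (simp add: z_def)
    also have "\<dots> \<le> M * norm (z n + (\<Sum>j\<in>{1..m}. A n j (x j)))"
      using RM[OF mn(2)] csub_add[OF Xs(1)[OF mn(2)] zn sB] by blast
    also have "\<dots> \<le> M * (norm (z n) + M * prod_norm m y)"
    proof (intro mult_left_mono M0 order_trans[OF norm_triangle_ineq] add_left_mono)
      have "norm (\<Sum>j\<in>{1..m}. A n j (x j)) \<le> (\<Sum>j\<in>{1..m}. norm (A n j (R j (y j))))"
        using Yrx[OF x] by (intro order_trans[OF norm_sum] sum_mono) (auto simp: y_def)
      also have "\<dots> \<le> (\<Sum>j\<in>{1..m}. M * norm (y j))"
        using BnM Pin[OF yP] by (intro sum_mono) auto
      finally show "norm (\<Sum>j\<in>{1..m}. A n j (x j)) \<le> M * prod_norm m y"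
        by (simp add: prod_norm_def sum_distrib_left)
    qed
    finally have sn: "norm (x n) \<le> M * norm (z n) + M * M * prod_norm m y" by (simp add: algebra_simps)
    have "prod_norm n x \<le> (M + M * M) * prod_norm m y + M * prod_norm n z"
      using pn_split[of x] sx sn pz(1) M0 mult_left_mono[OF pz(1) M0] by (simp add: algebra_simps)
    also have "\<dots> \<le> (M + M * M) * ((1 + real m * M) / (1 - q) * prod_norm n z) + M * prod_norm n z"
      using e3 M0 by (intro add_right_mono mult_left_mono) auto
    finally show ?thesis by (simp add: C_def z_def algebra_simps)
  qed
  have inj: "inj_on T MD"
  proof (rule inj_onI)
    fix x x' assume x: "x \<in> MD" and x': "x' \<in> MD" and eq: "T x = T x'"
    have "prod_norm m (Yr x - Yr x') = prod_norm m (KK (Yr x) - KK (Yr x'))"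
      unfolding prod_norm_def
    proof (rule sum.cong)
      fix i assume "i \<in> {1..m}"
      have "Yr x i - Yr x' i = KK (Yr x) i - KK (Yr x') i"
        using fun_cong[OF Yrfix[OF x], of i] fun_cong[OF Yrfix[OF x'], of i] eq by simp
      then show "norm ((Yr x - Yr x') i) = norm ((KK (Yr x) - KK (Yr x')) i)" by simp
    qed simp
    also have "\<dots> \<le> q * prod_norm m (Yr x - Yr x')" by (rule KKc[OF YrP[OF x] YrP[OF x']])
    finally have "(1 - q) * prod_norm m (Yr x - Yr x') \<le> 0" by (simp add: algebra_simps)
    moreover have "prod_norm m (Yr x - Yr x') \<ge> 0" unfolding prod_norm_def by (intro sum_nonneg) auto
    ultimately have pz: "prod_norm m (Yr x - Yr x') = 0" using q
      by (metis diff_gt_0_iff_gt linorder_not_le mult_pos_pos order_antisym_conv)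
    have yeq: "Yr x j = Yr x' j" if j: "j \<in> {1..m}" for j
      using comp_le_prod_norm[OF j, of "Yr x - Yr x'"] pz by simp
    have xj: "x j = x' j" if j: "j \<in> {1..m}" for j
      using Yrx[OF x j] Yrx[OF x' j] yeq[OF j] by simp
    show "x = x'"
    proof
      fix j show "x j = x' j"
      proof (cases "j \<in> {1..n}")
        case False then show ?thesis using MDout[OF x False] MDout[OF x' False] by simp
      next
        case True
        show ?thesis
        proof (cases "j = n")
          case True
          have "(\<Sum>j\<in>{1..m}. A n j (x j)) = (\<Sum>j\<in>{1..m}. A n j (x' j))" using xj by simp
          then show ?thesis using Yrn[OF x] Yrn[OF x'] eq True by simp
        next
          case False then show ?thesis using xj True nm by auto
        qed
      qed
    qed
  qed
  have surj: "z \<in> T ` MD" if z: "z \<in> prod_space X n" for z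
  proof -
    have zX: "z i \<in> X i" if "i \<in> {1..n}" for i using z that by (simp add: prod_space_def)
    have WP: "W z \<in> P"
      unfolding P_def prod_space_def
    proof safe
      fix i assume i: "i \<in> {1..m}"
      have "A i n (R n (z n)) \<in> X i"
        using bop_in[OF Bbop[OF mnj[OF i] mn(2)] zX[OF mn(2)]] i mn(3) by auto
      then show "W z i \<in> X i" using csub_add[OF XsM[OF i] zX[OF mnj[OF i]]] i by (simp add: W_def)
    qed (auto simp: W_def)
    obtain y where yP: "y \<in> P" and yfix: "y = (\<lambda>i. W z i + KK y i)"
      using fixpt[of m X KK q "W z"] Xs(2) mnj XsM csub_add KKP KKc q WP unfolding P_def by blast
    have RyX: "R j (y j) \<in> D j j" if "j \<in> {1..m}" for j using Rin[OF mnj[OF that] Pin[OF yP that]] .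
    have AnX: "A n j (R j (y j)) \<in> X n" if j: "j \<in> {1..m}" for j
      using bop_in[OF Bbop[OF mn(2) mnj[OF j]] Pin[OF yP j]] j mn(3) by auto
    define v where "v = z n + (\<Sum>j\<in>{1..m}. A n j (R j (y j)))"
    have vX: "v \<in> X n" unfolding v_def
      using AnX by (intro csub_add[OF Xs(1)[OF mn(2)] zX[OF mn(2)]] csub_sum[OF Xs(1)[OF mn(2)]]) auto
    define x where "x j = (if j \<in> {1..m} then R j (y j) else if j = n then R n v else 0)" for j
    have xMD: "x \<in> MD"
      unfolding MD_def mat_dom_def prod_space_def
    proof safe
      fix i assume i: "i \<in> {1..n}"
      show "x i \<in> D i i"
      proof (cases "i \<in> {1..m}")
        case True then show ?thesis using RyX by (simp add: x_def)
      next
        case False then have "i = n" using i nm by auto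
        then show ?thesis using Rin[OF mn(2) vX] False using mn(3) by (auto simp: x_def)
      qed
    next
      fix i assume "i \<notin> {1..n}" then show "x i = 0" using nm by (auto simp: x_def)
    qed
    have xn: "x n = R n v" using mn(3) by (auto simp: x_def)
    have sA: "(\<Sum>j\<in>{1..m}. A n j (x j)) = (\<Sum>j\<in>{1..m}. A n j (R j (y j)))"
      by (intro sum.cong) (auto simp: x_def)
    have "T x = z"
    proof
      fix i show "T x i = z i"
      proof (cases "i \<in> {1..m}")
        case i: True
        have xi: "x i = R i (y i)" using i by (simp add: x_def)
        have s2: "(\<Sum>j\<in>{1..m}-{i}. A i j (x j)) = (\<Sum>j\<in>{1..m}-{i}. A i j (R j (y j)))"
          by (intro sum.cong) (auto simp: x_def)
        have yi: "y i = z i + A i n (R n (z n)) + KK y i"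
          using fun_cong[OF yfix, of i] i by (simp add: W_def)
        have "cscale J l (x i) - A i i (x i) = y i" using Req[OF mnj[OF i] Pin[OF yP i]] xi by simp
        then show ?thesis
          using Ti[OF i, of x] s2 yi KKexp[OF i, of y] Ainexp[OF i yP zX[OF mn(2)]] xn
          by (simp add: v_def algebra_simps)
      next
        case False
        show ?thesis
        proof (cases "i = n")
          case True
          have "cscale J l (x n) - A n n (x n) = v" using Req[OF mn(2) vX] xn by simp
          then show ?thesis using Tn[of x] sA True by (simp add: v_def)
        next
          case False2: False
          then have "i \<notin> {1..n}" using False nm by auto
          then show ?thesis using z Tapp by (auto simp: prod_space_def)
        qed
      qed
    qed
    then show ?thesis using xMD by blast
  qed
  have "bij_betw T MD (prod_space X n)"
    unfolding bij_betw_def using inj Tin surj by blast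
  then show ?thesis using est unfolding bdd_invertible_def T_def[symmetric] MD_def[symmetric] by blast
qed


theorem theorem4p1:
  fixes J :: "'a::banach \<Rightarrow> 'a" and X :: "nat \<Rightarrow> 'a set" and n :: nat
    and D :: "nat \<Rightarrow> nat \<Rightarrow> 'a set" and A :: "nat \<Rightarrow> nat \<Rightarrow> 'a \<Rightarrow> 'a"
  assumes "n \<ge> 2"
    and "op_matrix J X n D A"
    and "\<forall>k\<in>{2..n}. mat_closed k D A"
    and "\<forall>k\<in>{2..n-1}. op_spectrum J (X k) (D k k) (A k k) \<union> mat_spectrum J X k D A \<noteq> UNIV"
  shows "mat_spectrum J X n D A \<subseteq> schur_set J X n D A n"
proof
  fix l assume lsp: "l \<in> mat_spectrum J X n D A"
  define m where "m = n - 1"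
  have nm: "n = Suc m" and m: "m \<ge> 1" using assms(1) by (simp_all add: m_def)
  have nminus: "{1..n} - {n} = {1..m}" using nm by auto
  show "l \<in> schur_set J X n D A n"
  proof (rule ccontr)
    assume "l \<notin> schur_set J X n D A n"
    then have ns: "\<forall>j\<in>{1..m}. l \<notin> schur_set2 J X n D A n j"
      unfolding schur_set_def nminus by blast
    have "\<forall>j\<in>{1..m}. l \<notin> op_spectrum J (X n) (D n n) (A n n) \<and> l \<notin> op_spectrum J (X j) (D j j) (A j j)
              \<and> schur_R J X n D A n j l < 1"
    proof
      fix j assume "j \<in> {1..m}"
      then have "l \<notin> schur_set2 J X n D A n j" using ns by blast
      then show "l \<notin> op_spectrum J (X n) (D n n) (A n n) \<and> l \<notin> op_spectrum J (X j) (D j j) (A j j)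
              \<and> schur_R J X n D A n j l < 1"
        unfolding schur_set2_def by (auto simp: not_le)
    qed
    from main_inv[OF m nm assms(2) this] lsp show False by (simp add: mat_spectrum_def)
  qed
qed

end
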